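(* Let $\mathbf p=(p_1,p_2)^T\in\mathbb{Z}^2\setminus\{\mathbf0\}$ be such that $\kappa=\gcd(|p_1|,|p_2|)$ is odd. Then there exists a sequence of positive integers $N$ increasing without bound such that for each such $N$ and every $\mathbf a\in\mathcal D$, any two non-consecutive lattice points of $\Sigma'_{\mathbf a}$ cannot both lie in $D_{\mathbf p}$; i.e. if $\mathbf x,\mathbf y\in\Sigma'_{\mathbf a}\cap D_{\mathbf p}$ then $\mathbf y\in\{\mathbf x,\widehat{\mathbf x+\mathbf p},\widehat{\mathbf x-\mathbf p}\}$.
   Context: For a positive integer $N$: $\mathcal D=[-N,N]^2\cap\mathbb{Z}^2$; for $\mathbf k\in\mathbb{Z}^2$, $\widehat{\mathbf k}$ is the unique element of $\mathcal D$ with $\mathbf k-\widehat{\mathbf k}\in(2N+1)\mathbb{Z}^2$; $\Sigma'_{\mathbf a}=\{\widehat{\mathbf a+k\mathbf p}:k\in\mathbb{Z}\}$ for $\mathbf a\in\mathcal D$; and $D_{\mathbf p}=\{\mathbf x\in\mathcal D:|\mathbf x|<|\mathbf p|\}$. Here $\gcd(p_1,0)=|p_1|$. *)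

theory Defs
  imports Complex_Main
begin

type_synonym pt = "int \<times> int"

definition boxD :: "nat \<Rightarrow> pt set" where
  "boxD N = {x. \<bar>fst x\<bar> \<le> int N \<and> \<bar>snd x\<bar> \<le> int N}"

definition hat :: "nat \<Rightarrow> pt \<Rightarrow> pt" where
  "hat N k = (THE y. y \<in> boxD N \<and> (2 * int N + 1) dvd (fst k - fst y)
                                   \<and> (2 * int N + 1) dvd (snd k - snd y))"

definition padd :: "pt \<Rightarrow> pt \<Rightarrow> pt" where
  "padd x y = (fst x + fst y, snd x + snd y)"

definition pscale :: "int \<Rightarrow> pt \<Rightarrow> pt" where
  "pscale k x = (k * fst x, k * snd x)"

definition pnorm :: "pt \<Rightarrow> real" where
  "pnorm x = sqrt (real_of_int (fst x ^ 2 + snd x ^ 2))"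

definition Sigma' :: "nat \<Rightarrow> pt \<Rightarrow> pt \<Rightarrow> pt set" where
  "Sigma' N p a = {hat N (padd a (pscale k p)) | k. True}"

definition Dp :: "nat \<Rightarrow> pt \<Rightarrow> pt set" where
  "Dp N p = {x \<in> boxD N. pnorm x < pnorm p}"

end

theory Submission
  imports Defs
begin

lemma int_abs_le_sq: "\<bar>x::int\<bar> \<le> x^2"
proof (cases "x = 0")
  case False
  then have "1 \<le> \<bar>x\<bar>" by auto
  then have "\<bar>x\<bar> * 1 \<le> \<bar>x\<bar> * \<bar>x\<bar>" by (intro mult_left_mono) auto
  then show ?thesis by (simp add: power2_eq_square abs_mult[symmetric])
qed simp

lemma small_mult_zero:
  fixes A c :: int assumes "A > 0" "\<bar>A * c\<bar> < A" shows "c = 0"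
proof (rule ccontr)
  assume "c \<noteq> 0"
  then have "1 \<le> \<bar>c\<bar>" by auto
  then have "A * 1 \<le> A * \<bar>c\<bar>" using assms(1) by (intro mult_left_mono) auto
  then show False using assms by (simp add: abs_mult)
qed

lemma core:
  fixes x1 x2 y1 y2 p1 p2 k m \<kappa> P :: int
  assumes kap: "\<kappa> = gcd p1 p2" "\<kappa> > 0"
    and P: "P = p1^2 + p2^2"
    and m: "m \<ge> 4*P^2 + 1"
    and d1: "\<kappa>*m dvd (y1 - x1 - k*p1)" and d2: "\<kappa>*m dvd (y2 - x2 - k*p2)"
    and nx: "x1^2 + x2^2 < P" and ny: "y1^2 + y2^2 < P"
  shows "\<exists>t. (t = 0 \<or> t = 1 \<or> t = -1) \<and> y1 = x1 + t*p1 \<and> y2 = x2 + t*p2"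
proof -
  define e1 where "e1 = y1 - x1"
  define e2 where "e2 = y2 - x2"
  obtain w1 where w1: "e1 = k*p1 + \<kappa>*m*w1" using d1 unfolding e1_def
    by (metis add_diff_cancel_left' diff_add_cancel dvdE)
  obtain w2 where w2: "e2 = k*p2 + \<kappa>*m*w2" using d2 unfolding e2_def
    by (metis add_diff_cancel_left' diff_add_cancel dvdE)
  obtain q1 where q1: "p1 = \<kappa>*q1" using kap by (metis dvdE gcd_dvd1)
  obtain q2 where q2: "p2 = \<kappa>*q2" using kap by (metis dvdE gcd_dvd2)
  have Ppos: "P > 0" using nx by (smt (verit) zero_le_power2)
  have cr: "e1*p2 - e2*p1 = (\<kappa>*\<kappa>*m) * (w1*q2 - w2*q1)"
    unfolding w1 w2 q1 q2 by (simp add: algebra_simps)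
  have bx1: "\<bar>x1\<bar> < P" using int_abs_le_sq[of x1] nx by (smt (verit) zero_le_power2)
  have bx2: "\<bar>x2\<bar> < P" using int_abs_le_sq[of x2] nx by (smt (verit) zero_le_power2)
  have by1: "\<bar>y1\<bar> < P" using int_abs_le_sq[of y1] ny by (smt (verit) zero_le_power2)
  have by2: "\<bar>y2\<bar> < P" using int_abs_le_sq[of y2] ny by (smt (verit) zero_le_power2)
  have bp1: "\<bar>p1\<bar> \<le> P" using int_abs_le_sq[of p1] P by (smt (verit) zero_le_power2)
  have bp2: "\<bar>p2\<bar> \<le> P" using int_abs_le_sq[of p2] P by (smt (verit) zero_le_power2)
  have be1: "\<bar>e1\<bar> \<le> 2*P" using bx1 by1 unfolding e1_def by linarith
  have be2: "\<bar>e2\<bar> \<le> 2*P" using bx2 by2 unfolding e2_def by linarith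
  have "\<bar>e1*p2\<bar> \<le> 2*P*P" unfolding abs_mult
    by (rule mult_mono) (use be1 bp2 Ppos in auto)
  moreover have "\<bar>e2*p1\<bar> \<le> 2*P*P" unfolding abs_mult
    by (rule mult_mono) (use be2 bp1 Ppos in auto)
  ultimately have "\<bar>e1*p2 - e2*p1\<bar> \<le> 4*P^2" by (simp add: power2_eq_square)
  also have "\<dots> < m" using m by simp
  also have "m \<le> \<kappa>*\<kappa>*m"
  proof -
    have "1 \<le> \<kappa>*\<kappa>" using kap(2) by (smt (verit) mult_pos_pos mult_le_cancel_left1)
    then have "1*m \<le> \<kappa>*\<kappa>*m" using m Ppos by (intro mult_right_mono) (auto intro: order_trans[OF _ m] simp: zero_le_power2)
    then show ?thesis by simp
  qed
  finally have "w1*q2 - w2*q1 = 0"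
    using small_mult_zero[of "\<kappa>*\<kappa>*m" "w1*q2 - w2*q1"] cr m Ppos kap
    by (smt (verit) mult_pos_pos)
  then have cr0: "e1*p2 = e2*p1" using cr by simp
  obtain u v where uv: "u*p1 + v*p2 = \<kappa>" using bezout_int kap by metis
  define t where "t = k + m*(u*w1 + v*w2)"
  have s: "u*e1 + v*e2 = \<kappa>*t" unfolding w1 w2 t_def using uv
    by (simp add: algebra_simps) (metis (no_types, opaque_lifting) distrib_left mult.assoc mult.commute)
  have "\<kappa>*e1 = (u*p1 + v*p2)*e1" using uv by simp
  also have "\<dots> = p1*(u*e1 + v*e2)" using cr0 by (simp add: algebra_simps)
  also have "\<dots> = \<kappa>*(t*p1)" by (simp only: s) (simp add: algebra_simps)
  finally have "\<kappa>*e1 = \<kappa>*(t*p1)" .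
  then have t1: "e1 = t*p1" using kap(2) by simp
  have "\<kappa>*e2 = (u*p1 + v*p2)*e2" using uv by simp
  also have "\<dots> = p2*(u*e1 + v*e2)" using cr0 by (simp add: algebra_simps)
  also have "\<dots> = \<kappa>*(t*p2)" by (simp only: s) (simp add: algebra_simps)
  finally have "\<kappa>*e2 = \<kappa>*(t*p2)" .
  then have t2: "e2 = t*p2" using kap(2) by simp
  have h1: "e1^2 \<le> 2*(x1^2+y1^2)"
  proof -
    have "0 \<le> (x1+y1)^2" by simp
    then show ?thesis unfolding e1_def by (simp add: power2_eq_square algebra_simps)
  qed
  have h2: "e2^2 \<le> 2*(x2^2+y2^2)"
  proof -
    have "0 \<le> (x2+y2)^2" by simp
    then show ?thesis unfolding e2_def by (simp add: power2_eq_square algebra_simps)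
  qed
  have eq: "e1^2+e2^2 = t^2*P" using t1 t2 P by (simp add: power_mult_distrib algebra_simps)
  have lt: "t^2*P < 4*P" unfolding eq[symmetric] using add_mono[OF h1 h2] nx ny by (simp add: algebra_simps)
  have "t^2 < 4"
  proof (rule ccontr)
    assume "\<not> t^2 < 4"
    then have "4*P \<le> t^2*P" using Ppos by (intro mult_right_mono) auto
    then show False using lt by simp
  qed
  have "\<bar>t\<bar> < 2"
  proof (rule ccontr)
    assume "\<not> \<bar>t\<bar> < 2"
    then have "2^2 \<le> \<bar>t\<bar>^2" by (intro power_mono) auto
    then show False using \<open>t^2 < 4\<close> by simp
  qed
  then have "t = 0 \<or> t = 1 \<or> t = -1" by auto
  then show ?thesis using t1 t2 unfolding e1_def e2_def by (intro exI[of _ t]) auto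
qed


lemma box_uniq:
  fixes a b :: int
  assumes "\<bar>a\<bar> \<le> int N" "\<bar>b\<bar> \<le> int N" "(2 * int N + 1) dvd (a - b)"
  shows "a = b"
proof (rule ccontr)
  assume "a \<noteq> b"
  then have "\<bar>2 * int N + 1\<bar> \<le> \<bar>a - b\<bar>" using assms(3) dvd_imp_le_int[of "a - b" "2 * int N + 1"] by simp
  then show False using assms(1,2) by linarith
qed

lemma rep_exists:
  fixes z :: int
  shows "\<exists>r. \<bar>r\<bar> \<le> int N \<and> (2 * int N + 1) dvd (z - r)"
proof -
  define M where "M = 2 * int N + 1"
  define r where "r = (z + int N) mod M - int N"
  have "M > 0" unfolding M_def by simp
  then have "0 \<le> (z + int N) mod M" "(z + int N) mod M < M" by simp_all
  then have "\<bar>r\<bar> \<le> int N" unfolding r_def M_def by linarith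
  moreover have "M dvd (z - r)"
  proof -
    have "z - r = (z + int N) - (z + int N) mod M" unfolding r_def by simp
    also have "\<dots> = M * ((z + int N) div M)" by (simp add: minus_mod_eq_mult_div)
    finally show ?thesis by simp
  qed
  ultimately show ?thesis unfolding M_def by blast
qed

lemma hat_spec:
  "hat N z \<in> boxD N \<and> (2 * int N + 1) dvd (fst z - fst (hat N z))
     \<and> (2 * int N + 1) dvd (snd z - snd (hat N z))"
proof -
  let ?P = "\<lambda>y. y \<in> boxD N \<and> (2 * int N + 1) dvd (fst z - fst y)
                                   \<and> (2 * int N + 1) dvd (snd z - snd y)"
  obtain r1 where r1: "\<bar>r1\<bar> \<le> int N" "(2 * int N + 1) dvd (fst z - r1)"
    using rep_exists by blast
  obtain r2 where r2: "\<bar>r2\<bar> \<le> int N" "(2 * int N + 1) dvd (snd z - r2)"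
    using rep_exists by blast
  have ex: "?P (r1, r2)" using r1 r2 unfolding boxD_def by simp
  have un: "y = (r1, r2)" if "?P y" for y
  proof -
    have "fst y = r1"
      using that r1 box_uniq[of "fst y" N r1] dvd_diff[of _ "fst z - r1" "fst z - fst y"]
      unfolding boxD_def by auto
    moreover have "snd y = r2"
      using that r2 box_uniq[of "snd y" N r2] dvd_diff[of _ "snd z - r2" "snd z - snd y"]
      unfolding boxD_def by auto
    ultimately show ?thesis by (cases y) auto
  qed
  have "?P (THE y. ?P y)" by (rule theI[of ?P, OF ex un])
  then show ?thesis unfolding hat_def .
qed

lemma hat_id:
  assumes "y \<in> boxD N" shows "hat N y = y"
proof -
  have h: "hat N y \<in> boxD N" "(2 * int N + 1) dvd (fst y - fst (hat N y))"
     "(2 * int N + 1) dvd (snd y - snd (hat N y))" using hat_spec by blast+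
  have "fst y = fst (hat N y)" using box_uniq h assms unfolding boxD_def by auto
  moreover have "snd y = snd (hat N y)" using box_uniq h assms unfolding boxD_def by auto
  ultimately show ?thesis by (simp add: prod_eq_iff)
qed


lemma norm_lt:
  assumes "pnorm x < pnorm p" shows "fst x^2 + snd x^2 < fst p^2 + snd p^2"
proof -
  have "real_of_int (fst x^2 + snd x^2) < real_of_int (fst p^2 + snd p^2)"
    using assms unfolding pnorm_def by (simp only: real_sqrt_less_iff)
  then show ?thesis by (simp only: of_int_less_iff)
qed

theorem lemma6:
  fixes p :: "int \<times> int"
  assumes "p \<noteq> (0, 0)"
    and "odd (gcd \<bar>fst p\<bar> \<bar>snd p\<bar>)"
  shows "\<exists>Ns :: nat \<Rightarrow> nat. strict_mono Ns \<and> (\<forall>i. 0 < Ns i) \<and>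
           (\<forall>i. \<forall>a \<in> boxD (Ns i). \<forall>x y.
              x \<in> Sigma' (Ns i) p a \<inter> Dp (Ns i) p \<and> y \<in> Sigma' (Ns i) p a \<inter> Dp (Ns i) p
              \<longrightarrow> y \<in> {x, hat (Ns i) (padd x p), hat (Ns i) (padd x (pscale (-1) p))})"
proof -
  obtain p1 p2 where pp: "p = (p1, p2)" by (cases p)
  define \<kappa> where "\<kappa> = gcd p1 p2"
  have kpos: "\<kappa> > 0" using assms(1) pp unfolding \<kappa>_def by auto
  have kodd: "odd \<kappa>" using assms(2) pp unfolding \<kappa>_def by simp
  define K where "K = nat \<kappa>"
  define h where "h = K div 2"
  have Kh: "K = 2*h + 1" using kodd kpos unfolding K_def h_def
    by (metis even_of_nat int_nat_eq less_le odd_two_times_div_two_succ)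
  define P where "P = p1^2 + p2^2"
  define c where "c = nat (4*P^2 + 1)"
  define Ns where "Ns = (\<lambda>i::nat. K*(i+c) + h)"
  have Kpos: "K \<ge> 1" using Kh by simp
  have "strict_mono Ns" unfolding strict_mono_def Ns_def using Kpos by auto
  moreover have "\<forall>i. 0 < Ns i" unfolding Ns_def c_def using Kpos
    by (simp add: add_pos_nonneg)
  moreover have "\<forall>i. \<forall>a \<in> boxD (Ns i). \<forall>x y.
              x \<in> Sigma' (Ns i) p a \<inter> Dp (Ns i) p \<and> y \<in> Sigma' (Ns i) p a \<inter> Dp (Ns i) p
              \<longrightarrow> y \<in> {x, hat (Ns i) (padd x p), hat (Ns i) (padd x (pscale (-1) p))}"
  proof (intro allI ballI impI)
    fix i a x y
    assume xy: "x \<in> Sigma' (Ns i) p a \<inter> Dp (Ns i) p \<and> y \<in> Sigma' (Ns i) p a \<inter> Dp (Ns i) p"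
    define N where "N = Ns i"
    define m where "m = int (2*(i+c)+1)"
    have MN: "2 * int N + 1 = \<kappa> * m"
    proof -
      have e1: "\<kappa> = 2 * int h + 1" using Kh kpos unfolding K_def by linarith
      have "2 * int N + 1 = 2 * (int K * (int i + int c) + int h) + 1" unfolding N_def Ns_def by simp
      also have "\<dots> = (2 * int h + 1) * (2 * (int i + int c) + 1)" using Kh by (simp add: algebra_simps)
      also have "\<dots> = \<kappa> * m" unfolding e1 m_def by simp
      finally show ?thesis .
    qed
    obtain k1 where k1: "x = hat N (padd a (pscale k1 p))" using xy unfolding Sigma'_def N_def by auto
    obtain k2 where k2: "y = hat N (padd a (pscale k2 p))" using xy unfolding Sigma'_def N_def by auto
    obtain x1 x2 where xx: "x = (x1, x2)" by (cases x)
    obtain y1 y2 where yy: "y = (y1, y2)" by (cases y)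
    obtain a1 a2 where aa: "a = (a1, a2)" by (cases a)
    have hx1: "(\<kappa>*m) dvd (a1 + k1*p1 - x1)" and hx2: "(\<kappa>*m) dvd (a2 + k1*p2 - x2)"
      using hat_spec[of N "padd a (pscale k1 p)", unfolded k1[symmetric] xx] aa pp MN
      by (simp_all add: padd_def pscale_def)
    have hy1: "(\<kappa>*m) dvd (a1 + k2*p1 - y1)" and hy2: "(\<kappa>*m) dvd (a2 + k2*p2 - y2)"
      using hat_spec[of N "padd a (pscale k2 p)", unfolded k2[symmetric] yy] aa pp MN
      by (simp_all add: padd_def pscale_def)
    have d1: "(\<kappa>*m) dvd (y1 - x1 - (k2-k1)*p1)"
    proof -
      have "y1 - x1 - (k2-k1)*p1 = (a1 + k1*p1 - x1) - (a1 + k2*p1 - y1)" by (simp add: algebra_simps)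
      then show ?thesis using dvd_diff[OF hx1 hy1] by (simp only:)
    qed
    have d2: "(\<kappa>*m) dvd (y2 - x2 - (k2-k1)*p2)"
    proof -
      have "y2 - x2 - (k2-k1)*p2 = (a2 + k1*p2 - x2) - (a2 + k2*p2 - y2)" by (simp add: algebra_simps)
      then show ?thesis using dvd_diff[OF hx2 hy2] by (simp only:)
    qed
    have nx: "x1^2 + x2^2 < P" using xy norm_lt[of x p] xx pp unfolding Dp_def P_def by auto
    have ny: "y1^2 + y2^2 < P" using xy norm_lt[of y p] yy pp unfolding Dp_def P_def by auto
    have mb: "m \<ge> 4*P^2 + 1" unfolding m_def c_def by simp
    obtain t where t: "t = 0 \<or> t = 1 \<or> t = -1" "y1 = x1 + t*p1" "y2 = x2 + t*p2"
      using core[OF \<kappa>_def kpos P_def mb d1 d2 nx ny] by blast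
    have Ppos: "P > 0" using nx by (smt (verit) zero_le_power2)
    have cN: "int c \<le> int N"
    proof -
      have "i + c \<le> K * (i+c)" using mult_le_mono1[OF Kpos, of "i+c"] by simp
      then have "c \<le> N" unfolding N_def Ns_def by linarith
      then show ?thesis by simp
    qed
    have "2*P \<le> 4*P^2" using Ppos by (simp add: power2_eq_square)
    then have PN: "2*P \<le> int N" using cN unfolding c_def by simp
    have bx1: "\<bar>x1\<bar> < P" using int_abs_le_sq[of x1] nx by (smt (verit) zero_le_power2)
    have bx2: "\<bar>x2\<bar> < P" using int_abs_le_sq[of x2] nx by (smt (verit) zero_le_power2)
    have bp1: "\<bar>p1\<bar> \<le> P" using int_abs_le_sq[of p1] P_def by (smt (verit) zero_le_power2)
    have bp2: "\<bar>p2\<bar> \<le> P" using int_abs_le_sq[of p2] P_def by (smt (verit) zero_le_power2)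
    have inb1: "padd x p \<in> boxD N" unfolding boxD_def padd_def xx pp
      using bx1 bx2 bp1 bp2 PN by (simp add: abs_le_iff) linarith
    have inb2: "padd x (pscale (-1) p) \<in> boxD N" unfolding boxD_def padd_def pscale_def xx pp
      using bx1 bx2 bp1 bp2 PN by (simp add: abs_le_iff) linarith
    show "y \<in> {x, hat (Ns i) (padd x p), hat (Ns i) (padd x (pscale (-1) p))}"
      unfolding N_def[symmetric] hat_id[OF inb1] hat_id[OF inb2]
      using t xx yy pp by (auto simp: padd_def pscale_def)
  qed
  ultimately show ?thesis by blast
qed

end
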